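(* Let $\mu^\ast$ be an upper quasi-density on $\mathbb{H}$, fix $k\in\mathbb{N}^+$, and let $h_1,\dots,h_n\in\mathbb{N}$ be such that $h_i\not\equiv h_j \pmod k$ for $1\le i<j\le n$. Set $\mathcal{H}:=\{h_1,\dots,h_n\}$ and $\mathcal{V}_{k,\mathcal{H}}:=\bigcup_{h\in\mathcal{H}}(k\cdot\mathbb{H}+h)$. Then for every finite $\mathcal{V}\subseteq\mathbb{H}$, $\mu^\ast(\mathcal{V}_{k,\mathcal{H}}\cup\mathcal{V})=\frac nk$ and $\mu^\ast(\mathcal{V}_{k,\mathcal{H}}\setminus\mathcal{V})\ge\frac nk$.
   Context: $\mathbb{N}=\{0,1,2,\dots\}$, $\mathbb{N}^+=\{1,2,\dots\}$; $\mathbb{H}$ is one of $\mathbb{Z},\mathbb{N},\mathbb{N}^+$. For $X\subseteq\mathbb{H}$, $k\in\mathbb{N}^+$, $h\in\mathbb{N}$, $k\cdot X+h:=\{kx+h:x\in X\}$. An upper quasi-density on $\mathbb{H}$ is a function $\mu^\ast:\mathcal{P}(\mathbb{H})\to\mathbb{R}$ with $\mu^\ast(\mathbb{H})=1$, $\mu^\ast(X)\le1$ for all $X$, $\mu^\ast(X\cup Y)\le\mu^\ast(X)+\mu^\ast(Y)$ for all $X,Y$, and $\mu^\ast(k\cdot X+h)=\frac1k\mu^\ast(X)$ for all $X\subseteq\mathbb{H}$, $h,k\in\mathbb{N}^+$. *)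

theory Defs
  imports Complex_Main "HOL-Number_Theory.Cong"
begin

text \<open>The ambient set H is one of Z, N, N+, all modelled as subsets of int.\<close>
definition admissible_domain :: "int set \<Rightarrow> bool" where
  "admissible_domain H \<longleftrightarrow> H = UNIV \<or> H = {0..} \<or> H = {1..}"

definition scale_shift :: "int \<Rightarrow> int \<Rightarrow> int set \<Rightarrow> int set" where
  "scale_shift k h X = (\<lambda>x. k * x + h) ` X"

text \<open>Upper quasi-density on H; mu is only constrained on subsets of H.\<close>
definition upper_quasi_density :: "int set \<Rightarrow> (int set \<Rightarrow> real) \<Rightarrow> bool" where
  "upper_quasi_density H mu \<longleftrightarrow>
     mu H = 1 \<and>
     (\<forall>X. X \<subseteq> H \<longrightarrow> mu X \<le> 1) \<and>
     (\<forall>X Y. X \<subseteq> H \<longrightarrow> Y \<subseteq> H \<longrightarrow> mu (X \<union> Y) \<le> mu X + mu Y) \<and>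
     (\<forall>X k h. X \<subseteq> H \<longrightarrow> k \<ge> 1 \<longrightarrow> h \<ge> 1 \<longrightarrow>
        mu (scale_shift k h X) = mu X / real_of_int k)"

end

theory Submission
  imports Defs
begin

lemma adm_mem: "admissible_domain H \<Longrightarrow> (q \<ge> 1 \<or> H = UNIV) \<Longrightarrow> q \<in> H"
  unfolding admissible_domain_def by auto

lemma adm_nonneg: "admissible_domain H \<Longrightarrow> x \<in> H \<Longrightarrow> H \<noteq> UNIV \<Longrightarrow> x \<ge> 0"
  unfolding admissible_domain_def by auto

lemma ss_sub:
  assumes "admissible_domain H" "X \<subseteq> H" "k \<ge> 1" "r \<ge> 0"
  shows "scale_shift k r X \<subseteq> H"
proof
  fix y assume "y \<in> scale_shift k r X"
  then obtain x where x: "x \<in> X" "y = k*x + r" unfolding scale_shift_def by auto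
  have "x \<in> H" using x assms by auto
  show "y \<in> H"
  proof (cases "H = UNIV")
    case True then show ?thesis by simp
  next
    case False
    then have "H = {0..} \<or> H = {1..}" using assms(1) unfolding admissible_domain_def by auto
    then show ?thesis using \<open>x \<in> H\<close> x assms(3,4)
      by (auto simp: mult_nonneg_nonneg) (smt (verit) mult_le_cancel_left1)
  qed
qed

locale uqd =
  fixes H :: "int set" and mu :: "int set \<Rightarrow> real"
  assumes adm: "admissible_domain H" and uq: "upper_quasi_density H mu"
begin

lemma muH: "mu H = 1" using uq unfolding upper_quasi_density_def by auto

lemma subadd: "X \<subseteq> H \<Longrightarrow> Y \<subseteq> H \<Longrightarrow> mu (X \<union> Y) \<le> mu X + mu Y"
  using uq unfolding upper_quasi_density_def by auto

lemma scale: "X \<subseteq> H \<Longrightarrow> k \<ge> 1 \<Longrightarrow> h \<ge> 1 \<Longrightarrow> mu (scale_shift k h X) = mu X / real_of_int k"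
  using uq unfolding upper_quasi_density_def by auto

lemma nonneg: "X \<subseteq> H \<Longrightarrow> mu X \<ge> 0"
  using subadd[of X X] by simp

lemma single_eq_le: "a \<in> H \<Longrightarrow> a < b \<Longrightarrow> mu {b} = mu {a}"
proof -
  assume a: "a \<in> H" "a < b"
  have "{b} = scale_shift 1 (b - a) {a}" unfolding scale_shift_def by auto
  then show ?thesis using scale[of "{a}" 1 "b - a"] a by simp
qed

lemma single_eq: "a \<in> H \<Longrightarrow> b \<in> H \<Longrightarrow> mu {b} = mu {a}"
  by (metis linorder_neqE_linordered_idom single_eq_le)

lemma single0: "a \<in> H \<Longrightarrow> mu {a} = 0"
proof -
  assume a: "a \<in> H"
  have sub: "scale_shift 2 1 {a} \<subseteq> H" using ss_sub[OF adm, of "{a}" 2 1] a by simp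
  have e: "scale_shift 2 1 {a} = {2*a+1}" unfolding scale_shift_def by auto
  have "mu {2*a+1} = mu {a} / 2" using scale[of "{a}" 2 1] a e by simp
  moreover have "mu {2*a+1} = mu {a}" using single_eq[of a "2*a+1"] a sub e by simp
  ultimately show ?thesis by simp
qed

lemma empty0: "mu {} = 0"
proof -
  have "scale_shift 2 1 {} = {}" unfolding scale_shift_def by auto
  then have "mu {} = mu {} / 2" using scale[of "{}" 2 1] by simp
  then show ?thesis by simp
qed

lemma finite0: "finite F \<Longrightarrow> F \<subseteq> H \<Longrightarrow> mu F = 0"
proof (induction F rule: finite_induct)
  case empty then show ?case using empty0 by simp
next
  case (insert a F)
  have "mu ({a} \<union> F) \<le> mu {a} + mu F" using subadd[of "{a}" F] insert by auto
  then have "mu (insert a F) \<le> 0" using single0[of a] insert by auto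
  moreover have "mu (insert a F) \<ge> 0" using nonneg insert by auto
  ultimately show ?case by simp
qed

lemma classmu: "k \<ge> 1 \<Longrightarrow> r \<ge> 0 \<Longrightarrow> mu (scale_shift k r H) = 1 / real_of_int k"
proof -
  assume k: "k \<ge> 1" and r: "r \<ge> 0"
  show ?thesis
  proof (cases "r \<ge> 1")
    case True then show ?thesis using scale[of H k r] k muH by simp
  next
    case False
    then have r0: "r = 0" using r by simp
    have sub: "scale_shift k 0 H \<subseteq> H" using ss_sub[OF adm, of H k 0] k by simp
    have "scale_shift 1 k (scale_shift k 0 H) = scale_shift k k H"
      unfolding scale_shift_def by (auto simp: image_image algebra_simps)
    then have "mu (scale_shift k 0 H) = mu (scale_shift k k H)"
      using scale[OF sub, of 1 k] k by simp
    also have "\<dots> = 1 / real_of_int k" using scale[of H k k] k muH by simp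
    finally show ?thesis using r0 by simp
  qed
qed

lemma union_bound:
  assumes "finite I" "\<forall>i\<in>I. g i \<ge> 0" "k \<ge> 1"
  shows "(\<Union>i\<in>I. scale_shift k (g i) H) \<subseteq> H \<and>
         mu (\<Union>i\<in>I. scale_shift k (g i) H) \<le> real (card I) / real_of_int k"
  using assms
proof (induction I rule: finite_induct)
  case empty then show ?case using empty0 by simp
next
  case (insert a I)
  have s1: "scale_shift k (g a) H \<subseteq> H" using ss_sub[OF adm, of H k "g a"] insert by simp
  have "mu (scale_shift k (g a) H \<union> (\<Union>i\<in>I. scale_shift k (g i) H))
        \<le> mu (scale_shift k (g a) H) + mu (\<Union>i\<in>I. scale_shift k (g i) H)"
    using subadd s1 insert by auto
  also have "\<dots> \<le> 1 / real_of_int k + real (card I) / real_of_int k"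
    using classmu[of k "g a"] insert by auto
  also have "\<dots> = real (card (insert a I)) / real_of_int k"
    using insert by (simp add: add_divide_distrib)
  finally show ?case using s1 insert by auto
qed

end

theorem mainTheorem6:
  fixes H :: "int set" and mu :: "int set \<Rightarrow> real"
    and k n :: nat and h :: "nat \<Rightarrow> nat" and V :: "int set"
  assumes "admissible_domain H"
    and "upper_quasi_density H mu"
    and "k \<ge> 1"
    and "n \<ge> 1"
    and "\<forall>i j. 1 \<le> i \<longrightarrow> i < j \<longrightarrow> j \<le> n \<longrightarrow> \<not> [h i = h j] (mod k)"
    and "finite V" and "V \<subseteq> H"
  shows "mu ((\<Union>r\<in>h ` {1..n}. scale_shift (int k) (int r) H) \<union> V) = real n / real k
    \<and> mu ((\<Union>r\<in>h ` {1..n}. scale_shift (int k) (int r) H) - V) \<ge> real n / real k"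
proof -
  interpret uqd H mu using assms(1,2) by unfold_locales
  define K where "K = int k"
  have K1: "K \<ge> 1" using assms(3) K_def by simp
  define A where "A = (\<Union>r\<in>h ` {1..n}. scale_shift K (int r) H)"
  have dist: "\<And>i j. i \<in> {1..n} \<Longrightarrow> j \<in> {1..n} \<Longrightarrow> h i mod k = h j mod k \<Longrightarrow> i = j"
  proof -
    fix i j assume ij: "i \<in> {1..n}" "j \<in> {1..n}" "h i mod k = h j mod k"
    show "i = j"
    proof (rule ccontr)
      assume "i \<noteq> j"
      then have "i < j \<or> j < i" by auto
      then show False using assms(5) ij unfolding cong_def by (metis atLeastAtMost_iff)
    qed
  qed
  have injh: "inj_on h {1..n}" using dist by (intro inj_onI) auto
  have cardR: "card (h ` {1..n}) = n" using card_image[OF injh] by simp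
  have Abound: "A \<subseteq> H \<and> mu A \<le> real n / real k"
    using union_bound[of "h ` {1..n}" int K] K1 cardR unfolding A_def K_def by simp
  define T where "T = (\<lambda>i. int (h i mod k)) ` {1..n}"
  have injT: "inj_on (\<lambda>i. int (h i mod k)) {1..n}" using dist by (intro inj_onI) auto
  have cardT: "card T = n" using card_image[OF injT] unfolding T_def by simp
  have Tsub: "T \<subseteq> {0..<K}" unfolding T_def K_def using assms(3) by auto
  define S where "S = {0..<K} - T"
  have cardS: "card S = k - n" unfolding S_def
    using card_Diff_subset[OF _ Tsub] cardT K_def by (simp add: finite_subset[OF Tsub])
  have nk: "n \<le> k" using card_mono[OF _ Tsub] cardT K_def by simp
  define U where "U = (\<Union>r\<in>S. scale_shift K (id r) H)"
  have Ubound: "U \<subseteq> H \<and> mu U \<le> real (k - n) / real k"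
    using union_bound[of S id K] K1 cardS unfolding U_def K_def S_def by auto
  define M where "M = int (\<Sum>i\<in>{1..n}. h i) + K"
  define F where "F = {x\<in>H. 0 \<le> x \<and> x \<le> M}"
  have Ffin: "finite F" unfolding F_def by (rule finite_subset[of _ "{0..M}"]) auto
  have FH: "F \<subseteq> H" unfolding F_def by auto
  have hM: "\<And>i. i \<in> {1..n} \<Longrightarrow> int (h i) + K \<le> M"
  proof -
    fix i assume i: "i \<in> {1..n}"
    have "h i \<le> (\<Sum>i\<in>{1..n}. h i)" using member_le_sum[of i "{1..n}" h] i by simp
    then show "int (h i) + K \<le> M" unfolding M_def by (simp only: of_nat_le_iff add_right_mono)
  qed
  have cover: "\<And>x. x \<in> H \<Longrightarrow> x \<in> A \<or> x \<in> U \<or> x \<in> F"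
  proof -
    fix x assume xH: "x \<in> H"
    show "x \<in> A \<or> x \<in> U \<or> x \<in> F"
    proof (cases "x \<in> F")
      case True then show ?thesis by simp
    next
      case False
      then have big: "H = UNIV \<or> x > M" using xH adm_nonneg[OF adm xH] unfolding F_def by auto
      define r where "r = x mod K"
      have r: "0 \<le> r" "r < K" using K1 unfolding r_def by auto
      show ?thesis
      proof (cases "r \<in> T")
        case True
        then obtain i where i: "i \<in> {1..n}" "r = int (h i mod k)" unfolding T_def by auto
        have "r = int (h i) mod K" using i K_def by (simp add: zmod_int)
        then have "K dvd (x - int (h i))" unfolding r_def by (simp add: mod_eq_dvd_iff)
        then obtain q where q: "x - int (h i) = K * q" by (auto elim: dvdE)
        have "q \<in> H"
        proof (rule adm_mem[OF adm])
          show "q \<ge> 1 \<or> H = UNIV"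
          proof (cases "H = UNIV")
            case False
            then have "x > M" using big by simp
            then have "K * q > 0" using q hM[OF i(1)] K1 by linarith
            then show ?thesis using K1 by (simp add: zero_less_mult_iff)
          qed simp
        qed
        then have "x \<in> scale_shift K (int (h i)) H" unfolding scale_shift_def
          using q by (auto intro!: image_eqI[of _ _ q] simp: algebra_simps)
        then show ?thesis unfolding A_def using i by auto
      next
        case False
        then have rS: "r \<in> S" unfolding S_def using r by auto
        have "K dvd (x - r)" unfolding r_def by (simp add: mod_eq_dvd_iff)
        then obtain q where q: "x - r = K * q" by (auto elim: dvdE)
        have "q \<in> H"
        proof (rule adm_mem[OF adm])
          show "q \<ge> 1 \<or> H = UNIV"
          proof (cases "H = UNIV")
            case False
            then have "x > M" using big by simp
            moreover have "M \<ge> K" unfolding M_def by (simp add: sum_nonneg)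
            ultimately have "K * q > 0" using q r by linarith
            then show ?thesis using K1 by (simp add: zero_less_mult_iff)
          qed simp
        qed
        then have "x \<in> scale_shift K (id r) H" unfolding scale_shift_def
          using q by (auto intro!: image_eqI[of _ _ q] simp: algebra_simps)
        then show ?thesis unfolding U_def using rS by auto
      qed
    qed
  qed
  have VF0: "mu (V \<union> F) = 0" using finite0[of "V \<union> F"] Ffin FH assms(6,7) by auto
  have kpos: "real k > 0" using assms(3) by simp
  have kn: "real (k - n) / real k = 1 - real n / real k"
    using nk kpos by (simp add: of_nat_diff field_simps)
  have eq2: "H = (A - V) \<union> ((V \<union> F) \<union> U)" using cover Abound Ubound FH assms(7) by blast
  have "1 \<le> mu (A - V) + mu ((V \<union> F) \<union> U)"
    using subadd[of "A - V" "(V \<union> F) \<union> U"] eq2 muH Abound Ubound FH assms(7) by auto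
  also have "mu ((V \<union> F) \<union> U) \<le> mu (V \<union> F) + mu U"
    using subadd[of "V \<union> F" U] Ubound FH assms(7) by auto
  finally have p2: "mu (A - V) \<ge> real n / real k" using VF0 Ubound kn by linarith
  have eq1: "H = (A \<union> V) \<union> (F \<union> U)" using cover Abound Ubound FH assms(7) by blast
  have "1 \<le> mu (A \<union> V) + mu (F \<union> U)"
    using subadd[of "A \<union> V" "F \<union> U"] eq1 muH Abound Ubound FH assms(7) by auto
  also have "mu (F \<union> U) \<le> mu F + mu U"
    using subadd[of F U] Ubound FH by auto
  finally have lo: "mu (A \<union> V) \<ge> real n / real k"
    using finite0[OF Ffin FH] Ubound kn by linarith
  have "mu (A \<union> V) \<le> mu A + mu V" using subadd Abound assms(7) by auto
  then have hi: "mu (A \<union> V) \<le> real n / real k"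
    using finite0[OF assms(6,7)] Abound by linarith
  show ?thesis using lo hi p2 unfolding A_def K_def by simp
qed

end
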